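(* Consider the following networked control setting. Let $f_p:\mathbb{R}^{n_p}\times\mathbb{R}^{m_p}\to\mathbb{R}^{n_p}$ with $f_p(0,0)=0$, closed sets $\mathbb{X}_p\subseteq\mathbb{R}^{n_p}$, $\mathbb{U}_p\subseteq\mathbb{R}^{m_p}$ containing the origin, $Q,R>0$, and integers $g\in\mathbb{I}_{\geq1}$, $c\in\mathbb{I}_{\geq g}$, $b\in\mathbb{I}_{\geq c}$ with $q:=\lceil c/g\rceil\geq2$. The overall state is $x=(x_p,u_s,\beta)\in\mathbb{X}:=\mathbb{X}_p\times\mathbb{U}_p\times\mathbb{I}_{[0,b]}$, the input $u=(u_c,\gamma,\delta)\in\mathbb{U}:=\mathbb{U}_p\times\{(\gamma,\delta)\in\{0,1\}^2:\gamma+\delta\leq1\}$, and the dynamics are $x(k+1)=f(x(k),u(k))$ with $$f(x,u)=\big(f_p(x_p,(\gamma+\delta)u_c+(1-\gamma-\delta)u_s),\ (\gamma+\delta)u_c+(1-\gamma-\delta)u_s,\ \min\{\beta+(1-\delta)g-\gamma c,b\}\big).$$ For $\psi>0$ the stage cost is $\ell(x,u)=\|x_p\|_Q^2+(\gamma+\delta)\|u_c\|_R^2+(1-\gamma-\delta)\|u_s\|_R^2+\psi(b^2-\beta^2)$. For $u_c\in\mathbb{U}_p$ define $f_{p,0}(x_p,u_c):=x_p$, $f_{p,i}(x_p,u_c):=f_p(f_{p,i-1}(x_p,u_c),u_c)$. Assume: (A1) there exist a closed set $\mathbb{X}_{f,p}\subseteq\mathbb{X}_p$ containing the origin and $k_p:\mathbb{X}_{f,p}\to\mathbb{U}_p$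 such that for all $x_p\in\mathbb{X}_{f,p}$: $f_{p,i}(x_p,k_p(x_p))\in\mathbb{X}_p$ for all $i\in\mathbb{I}_{[1,q-1]}$ and $f_{p,q}(x_p,k_p(x_p))\in\mathbb{X}_{f,p}$; (A2) there is a continuous positive definite $V_{f,p}:\mathbb{X}_{f,p}\to\mathbb{R}$ with, for all $x_p\in\mathbb{X}_{f,p}$, $V_{f,p}(f_{p,q}(x_p,k_p(x_p)))-V_{f,p}(x_p)\leq -q\|k_p(x_p)\|_R^2-\sum_{i=0}^{q-1}\|f_{p,i}(x_p,k_p(x_p))\|_Q^2$; (A4) $\sigma>0$ satisfies $\sigma\geq\psi\big(qb^2-\tfrac16g^2(q-1)(q-2)(2q-3)\big)$. Let $V_f(x):=V_{f,p}(x_p)+\sigma(b^2-\beta^2)$ and $\mathbb{X}_f:=\mathbb{X}_{f,p}\times\mathbb{U}_p\times\mathbb{I}_{[0,b]}$. Fix $r\in\mathbb{I}_{\geq1}$, $M:=rq$, $N\in\mathbb{I}_{\geq M}$. The closed loop is generated by the rollout scheme: at each $k=jM$, $j\in\mathbb{I}_{\geq0}$, solve $\mathbb{P}(x(jM))$: minimize $\sum_{i=0}^{N-1}\ell(x(i|jM),u(i|jM))+V_f(x(N|jM))$ over $u(0|jM),\dots,u(N-1|jM)$ subject to $x(i+1|jM)=f(x(i|jM),u(i|jM))$, $x(i|jM)\in\mathbb{X}$, $u(i|jM)\in\mathbb{U}$ for $i\in\mathbb{I}_{[0,N-1]}$, $x(0|jM)=x(jM)$, $x(N|jM)\in\mathbb{X}_f$,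 with optimizer $u^*(\cdot|jM)$, and apply $u(jM+i)=u^*(i|jM)$ for $i\in\mathbb{I}_{[0,M-1]}$. Then, if $\mathbb{P}(x(0))$ is feasible, $\mathbb{P}(x(jM))$ is feasible for all $j\in\mathbb{I}_{\geq0}$ and the overall closed-loop state $x(k)$ converges to $(0,0,b)$ as $k\to\infty$.
   Context: $\mathbb{I}$ denotes the integers, $\mathbb{I}_{[a,b]}:=\mathbb{I}\cap[a,b]$, $\mathbb{I}_{\geq a}:=\mathbb{I}\cap[a,\infty)$, $\|v\|_A^2:=v^TAv$, $A>0$ means positive definite. Here $x_p$ is the plant state, $u_s$ the last applied (held) input, $\beta$ the token level of a token bucket (size $b$, rate $g$, cost $c$); $\gamma=1$ is a transmission over the token-bucket-constrained network and $\delta=1$ a transmission over a direct link which consumes no tokens and during which no tokens are added. "Feasible" means the constraint set is nonempty. *)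

theory Defs
  imports "HOL-Analysis.Analysis"
begin

definition qf :: "real^'n^'n \<Rightarrow> real^'n \<Rightarrow> real" where
  "qf A v = v \<bullet> (A *v v)"

definition pos_def_mat :: "real^'n^'n \<Rightarrow> bool" where
  "pos_def_mat A \<longleftrightarrow> (\<forall>v. v \<noteq> 0 \<longrightarrow> qf A v > 0)"

definition pos_def_fun :: "('a::real_vector) set \<Rightarrow> ('a \<Rightarrow> real) \<Rightarrow> bool" where
  "pos_def_fun S V \<longleftrightarrow> V 0 = 0 \<and> (\<forall>x\<in>S. x \<noteq> 0 \<longrightarrow> V x > 0)"

definition fpi :: "('x \<Rightarrow> 'u \<Rightarrow> 'x) \<Rightarrow> nat \<Rightarrow> 'x \<Rightarrow> 'u \<Rightarrow> 'x" where
  "fpi fp i xp uc = ((\<lambda>z. fp z uc) ^^ i) xp"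

type_synonym ('n,'m) st = "(real^'n) \<times> (real^'m) \<times> int"
type_synonym 'm inp = "(real^'m) \<times> int \<times> int"

definition dyn :: "(real^'n \<Rightarrow> real^'m \<Rightarrow> real^'n) \<Rightarrow> int \<Rightarrow> int \<Rightarrow> int
    \<Rightarrow> ('n,'m) st \<Rightarrow> 'm inp \<Rightarrow> ('n,'m) st" where
  "dyn fp g c b x u =
     (case x of (xp, us, \<beta>) \<Rightarrow> case u of (uc, \<gamma>, \<delta>) \<Rightarrow>
        let ua = real_of_int (\<gamma> + \<delta>) *\<^sub>R uc + real_of_int (1 - \<gamma> - \<delta>) *\<^sub>R us
        in (fp xp ua, ua, min (\<beta> + (1 - \<delta>) * g - \<gamma> * c) b))"

definition stage_cost :: "real^'n^'n \<Rightarrow> real^'m^'m \<Rightarrow> real \<Rightarrow> int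
    \<Rightarrow> ('n,'m) st \<Rightarrow> 'm inp \<Rightarrow> real" where
  "stage_cost Q R \<psi> b x u =
     (case x of (xp, us, \<beta>) \<Rightarrow> case u of (uc, \<gamma>, \<delta>) \<Rightarrow>
        qf Q xp + real_of_int (\<gamma> + \<delta>) * qf R uc + real_of_int (1 - \<gamma> - \<delta>) * qf R us
        + \<psi> * (real_of_int b ^ 2 - real_of_int \<beta> ^ 2))"

definition state_set :: "(real^'n) set \<Rightarrow> (real^'m) set \<Rightarrow> int \<Rightarrow> ('n,'m) st set" where
  "state_set Xp Up b = Xp \<times> Up \<times> {0..b}"

definition input_set :: "(real^'m) set \<Rightarrow> 'm inp set" where
  "input_set Up = Up \<times> {(\<gamma>, \<delta>). \<gamma> \<in> {0,1} \<and> \<delta> \<in> {0,1} \<and> \<gamma> + \<delta> \<le> 1}"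

definition term_cost :: "(real^'n \<Rightarrow> real) \<Rightarrow> real \<Rightarrow> int \<Rightarrow> ('n,'m) st \<Rightarrow> real" where
  "term_cost Vfp \<sigma> b x = (case x of (xp, us, \<beta>) \<Rightarrow>
      Vfp xp + \<sigma> * (real_of_int b ^ 2 - real_of_int \<beta> ^ 2))"

fun traj :: "('s \<Rightarrow> 'i \<Rightarrow> 's) \<Rightarrow> 's \<Rightarrow> (nat \<Rightarrow> 'i) \<Rightarrow> nat \<Rightarrow> 's" where
  "traj f x0 us 0 = x0"
| "traj f x0 us (Suc i) = f (traj f x0 us i) (us i)"

definition ocp_admissible :: "(real^'n \<Rightarrow> real^'m \<Rightarrow> real^'n) \<Rightarrow> int \<Rightarrow> int \<Rightarrow> int
    \<Rightarrow> (real^'n) set \<Rightarrow> (real^'m) set \<Rightarrow> (real^'n) set \<Rightarrow> nat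
    \<Rightarrow> ('n,'m) st \<Rightarrow> (nat \<Rightarrow> 'm inp) \<Rightarrow> bool" where
  "ocp_admissible fp g c b Xp Up Xfp N x0 us \<longleftrightarrow>
     (\<forall>i<N. traj (dyn fp g c b) x0 us i \<in> state_set Xp Up b \<and> us i \<in> input_set Up)
     \<and> traj (dyn fp g c b) x0 us N \<in> state_set Xfp Up b"

definition ocp_feasible :: "(real^'n \<Rightarrow> real^'m \<Rightarrow> real^'n) \<Rightarrow> int \<Rightarrow> int \<Rightarrow> int
    \<Rightarrow> (real^'n) set \<Rightarrow> (real^'m) set \<Rightarrow> (real^'n) set \<Rightarrow> nat \<Rightarrow> ('n,'m) st \<Rightarrow> bool" where
  "ocp_feasible fp g c b Xp Up Xfp N x0 \<longleftrightarrow> (\<exists>us. ocp_admissible fp g c b Xp Up Xfp N x0 us)"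

definition ocp_cost :: "(real^'n \<Rightarrow> real^'m \<Rightarrow> real^'n) \<Rightarrow> int \<Rightarrow> int \<Rightarrow> int
    \<Rightarrow> real^'n^'n \<Rightarrow> real^'m^'m \<Rightarrow> real \<Rightarrow> (real^'n \<Rightarrow> real) \<Rightarrow> real \<Rightarrow> nat
    \<Rightarrow> ('n,'m) st \<Rightarrow> (nat \<Rightarrow> 'm inp) \<Rightarrow> real" where
  "ocp_cost fp g c b Q R \<psi> Vfp \<sigma> N x0 us =
     (\<Sum>i<N. stage_cost Q R \<psi> b (traj (dyn fp g c b) x0 us i) (us i))
     + term_cost Vfp \<sigma> b (traj (dyn fp g c b) x0 us N)"

definition ocp_optimal :: "(real^'n \<Rightarrow> real^'m \<Rightarrow> real^'n) \<Rightarrow> int \<Rightarrow> int \<Rightarrow> int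
    \<Rightarrow> (real^'n) set \<Rightarrow> (real^'m) set \<Rightarrow> (real^'n) set
    \<Rightarrow> real^'n^'n \<Rightarrow> real^'m^'m \<Rightarrow> real \<Rightarrow> (real^'n \<Rightarrow> real) \<Rightarrow> real \<Rightarrow> nat
    \<Rightarrow> ('n,'m) st \<Rightarrow> (nat \<Rightarrow> 'm inp) \<Rightarrow> bool" where
  "ocp_optimal fp g c b Xp Up Xfp Q R \<psi> Vfp \<sigma> N x0 us \<longleftrightarrow>
     ocp_admissible fp g c b Xp Up Xfp N x0 us \<and>
     (\<forall>us'. ocp_admissible fp g c b Xp Up Xfp N x0 us' \<longrightarrow>
        ocp_cost fp g c b Q R \<psi> Vfp \<sigma> N x0 us \<le> ocp_cost fp g c b Q R \<psi> Vfp \<sigma> N x0 us')"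

end

theory Submission
  imports Defs
begin

lemma traj_shift: "traj f x0 us (a + i) = traj f (traj f x0 us a) (\<lambda>k. us (a + k)) i"
  by (induction i) auto

lemma traj_conc1: "i \<le> a \<Longrightarrow> traj f x0 (\<lambda>k. if k < a then v k else w (k - a)) i = traj f x0 v i"
  by (induction i) auto

lemma traj_conc2: "traj f x0 (\<lambda>k. if k < a then v k else w (k - a)) (a + i) = traj f (traj f x0 v a) w i"
  by (induction i) (auto simp: traj_conc1)

lemma sum_split: "(\<Sum>i<a+b. f i) = (\<Sum>i<a. f i) + (\<Sum>i<b. f (a+i))" for f :: "nat \<Rightarrow> real"
  by (induction b) (auto simp: add.assoc)

lemma sumsq: "(\<Sum>i<Suc n. (real (i - 1))^2) = real n * (real n - 1) * (2 * real n - 1) / 6"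
proof (induction n)
  case 0 then show ?case by simp
next
  case (Suc n)
  have "(\<Sum>i<Suc (Suc n). (real (i - 1))^2) = (\<Sum>i<Suc n. (real (i - 1))^2) + (real n)^2" by simp
  also have "\<dots> = real (Suc n) * (real (Suc n) - 1) * (2 * real (Suc n) - 1) / 6"
    unfolding Suc by (simp add: field_simps power2_eq_square)
  finally show ?case .
qed

lemma qf_zero[simp]: "qf A 0 = 0" by (simp add: qf_def)

lemma qf_nonneg: "pos_def_mat A \<Longrightarrow> qf A v \<ge> 0"
  unfolding pos_def_mat_def by (cases "v = 0") (auto intro: less_imp_le)

lemma qf_scale: "qf A (t *\<^sub>R v) = t^2 * qf A v"
  by (simp add: qf_def matrix_vector_mult_scaleR power2_eq_square)

lemma qf_lower:
  fixes A :: "real^'n^'n"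
  assumes "pos_def_mat A" shows "\<exists>l>0. \<forall>v. qf A v \<ge> l * (norm v)^2"
proof -
  let ?S = "sphere (0::real^'n) 1"
  have cont: "continuous_on ?S (qf A)"
    unfolding qf_def by (intro continuous_intros matrix_vector_mult_linear_continuous_on)
  have "compact ?S" by simp
  moreover have "?S \<noteq> {}" by (simp add: sphere_eq_empty)
  ultimately obtain v where v: "v \<in> ?S" "\<And>y. y \<in> ?S \<Longrightarrow> qf A v \<le> qf A y"
    using continuous_attains_inf[OF _ _ cont] by blast
  have "v \<noteq> 0" using v(1) by auto
  hence lpos: "qf A v > 0" using assms unfolding pos_def_mat_def by auto
  have "qf A w \<ge> qf A v * (norm w)^2" for w
  proof (cases "w = 0")
    case True then show ?thesis by simp
  next
    case False
    let ?u = "(1 / norm w) *\<^sub>R w"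
    have "?u \<in> ?S" using False by (simp add: norm_scaleR)
    hence "qf A v \<le> qf A ?u" by (rule v(2))
    also have "\<dots> = qf A w / (norm w)^2" by (simp add: qf_scale power_divide)
    finally show ?thesis using False by (simp add: field_simps)
  qed
  thus ?thesis using lpos by (metis mult.commute)
qed

lemma qf_tendsto0:
  fixes A :: "real^'n^'n"
  assumes "pos_def_mat A" "(\<lambda>k. qf A (f k)) \<longlonglongrightarrow> 0" shows "f \<longlonglongrightarrow> 0"
proof -
  obtain l where l: "l > 0" "\<And>v. qf A v \<ge> l * (norm v)^2" using qf_lower[OF assms(1)] by blast
  have "(\<lambda>k. qf A (f k) / l) \<longlonglongrightarrow> 0" using tendsto_divide[OF assms(2) tendsto_const[of l]] l by simp
  moreover have "(norm (f k))^2 \<le> qf A (f k) / l" for k using l by (simp add: field_simps mult.commute)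
  ultimately have "(\<lambda>k. (norm (f k))^2) \<longlonglongrightarrow> 0"
    using real_tendsto_sandwich[of "\<lambda>_. 0" "\<lambda>k. (norm (f k))^2" sequentially "\<lambda>k. qf A (f k) / l" 0]
    by simp
  hence "(\<lambda>k. sqrt ((norm (f k))^2)) \<longlonglongrightarrow> sqrt 0" by (intro tendsto_real_sqrt)
  hence "(\<lambda>k. norm (f k)) \<longlonglongrightarrow> 0" by simp
  thus ?thesis by (simp add: tendsto_norm_zero_iff)
qed


locale setting =
  fixes fp :: "real^'n \<Rightarrow> real^'m \<Rightarrow> real^'n"
    and Xp :: "(real^'n) set" and Up :: "(real^'m) set"
    and Q :: "real^'n^'n" and R :: "real^'m^'m"
    and g c b :: int and q :: nat
    and \<psi> \<sigma> :: real
    and Xfp :: "(real^'n) set" and kp :: "real^'n \<Rightarrow> real^'m" and Vfp :: "real^'n \<Rightarrow> real"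
  assumes Up0: "0 \<in> Up"
    and QR: "pos_def_mat Q" "pos_def_mat R"
    and gcb: "g \<ge> 1" "c \<ge> g" "b \<ge> c"
    and q_def: "q = nat \<lceil>real_of_int c / real_of_int g\<rceil>"
    and q2: "q \<ge> 2"
    and psi: "\<psi> > 0"
    and A1: "Xfp \<subseteq> Xp"
      "\<forall>xp\<in>Xfp. kp xp \<in> Up"
      "\<forall>xp\<in>Xfp. (\<forall>i\<in>{1..q-1}. fpi fp i xp (kp xp) \<in> Xp) \<and> fpi fp q xp (kp xp) \<in> Xfp"
    and A2: "pos_def_fun Xfp Vfp"
      "\<forall>xp\<in>Xfp. Vfp (fpi fp q xp (kp xp)) - Vfp xp
          \<le> - real q * qf R (kp xp) - (\<Sum>i<q. qf Q (fpi fp i xp (kp xp)))"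
    and A4: "\<sigma> > 0"
      "\<sigma> \<ge> \<psi> * (real q * real_of_int b ^ 2
               - 1/6 * real_of_int g ^ 2 * (real q - 1) * (real q - 2) * (2 * real q - 3))"
begin

abbreviation "F \<equiv> dyn fp g c b"
abbreviation "ell \<equiv> stage_cost Q R \<psi> b"
abbreviation "Vf \<equiv> term_cost Vfp \<sigma> b"
abbreviation "X \<equiv> state_set Xp Up b"
abbreviation "Xf \<equiv> state_set Xfp Up b"
abbreviation "U \<equiv> input_set Up"

definition bs :: "int \<Rightarrow> nat \<Rightarrow> int" where
  "bs \<beta> i = (if i = 0 then \<beta> else min (\<beta> + (int i - 1) * g) b)"

lemma qc: "(real q - 1) * real_of_int g < real_of_int c"
proof -
  have gpos: "real_of_int g > 0" using gcb by simp
  have "c / g > 0" using gcb by simp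
  hence "real q = of_int \<lceil>real_of_int c / real_of_int g\<rceil>" using q_def by simp
  hence "real q - 1 < c / g" by linarith
  thus ?thesis using gpos by (simp add: field_simps)
qed

lemma token_ineq:
  assumes "0 \<le> \<beta>" "\<beta> \<le> b"
  shows "\<psi> * (\<Sum>i<q. real_of_int b ^ 2 - real_of_int (bs \<beta> i) ^ 2)
           \<le> \<sigma> * (real_of_int (bs \<beta> q) ^ 2 - real_of_int \<beta> ^ 2)"
proof (cases "\<beta> = b")
  case True
  hence "bs \<beta> i = b" for i using gcb by (simp add: bs_def)
  thus ?thesis using True by simp
next
  case False
  hence lt: "\<beta> < b" using assms by simp
  have tm: "real_of_int b ^ 2 - real_of_int (bs \<beta> i) ^ 2
      \<le> real_of_int b ^ 2 - (real (i - 1) * real_of_int g) ^ 2" if "i < q" for i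
  proof (cases "i = 0")
    case True then show ?thesis using assms by (simp add: bs_def)
  next
    case False
    have ri: "real (i - 1) = real i - 1" using False by simp
    have "(real q - 1) * real_of_int g < real_of_int c" by (rule qc)
    moreover have "real i \<le> real q - 1" using that by linarith
    ultimately have "(real i - 1) * real_of_int g \<le> real_of_int b"
    proof -
      assume a1: "(real q - 1) * real_of_int g < real_of_int c" and a2: "real i \<le> real q - 1"
      have "(real i - 1) * real_of_int g \<le> (real q - 1) * real_of_int g"
        by (rule mult_right_mono) (use gcb a2 in auto)
      thus ?thesis using a1 gcb by linarith
    qed
    moreover have "(real i - 1) * real_of_int g \<le> real_of_int (\<beta> + (int i - 1) * g)"
      using assms by simp
    ultimately have "(real i - 1) * real_of_int g \<le> real_of_int (bs \<beta> i)"
      using False unfolding bs_def by (auto simp: min_def)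
    moreover have "0 \<le> (real i - 1) * real_of_int g" using False gcb by simp
    ultimately show ?thesis unfolding ri by (simp add: power_mono)
  qed
  have "(\<Sum>i<q. real_of_int b ^ 2 - real_of_int (bs \<beta> i) ^ 2)
     \<le> (\<Sum>i<q. real_of_int b ^ 2 - (real (i - 1) * real_of_int g) ^ 2)"
    by (rule sum_mono) (rule tm; simp)
  also have "\<dots> = real q * real_of_int b ^ 2 - real_of_int g ^ 2 * (\<Sum>i<q. (real (i - 1)) ^ 2)"
    by (simp add: sum_subtractf sum_distrib_left power_mult_distrib mult.commute)
  also have "(\<Sum>i<q. (real (i - 1)) ^ 2) = (\<Sum>i<Suc (q - 1). (real (i - 1)) ^ 2)"
    using q2 by simp
  also have "\<dots> = (real q - 1) * (real q - 2) * (2 * real q - 3) / 6"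
    unfolding sumsq using q2 by (simp add: of_nat_diff algebra_simps)
  finally have S: "(\<Sum>i<q. real_of_int b ^ 2 - real_of_int (bs \<beta> i) ^ 2)
     \<le> real q * real_of_int b ^ 2 - 1/6 * real_of_int g ^ 2 * (real q - 1) * (real q - 2) * (2 * real q - 3)"
    by simp
  have "\<psi> * (\<Sum>i<q. real_of_int b ^ 2 - real_of_int (bs \<beta> i) ^ 2) \<le> \<sigma>"
  proof -
    have "\<psi> * (\<Sum>i<q. real_of_int b ^ 2 - real_of_int (bs \<beta> i) ^ 2) \<le> \<psi> * (real q * real_of_int b ^ 2 - 1/6 * real_of_int g ^ 2 * (real q - 1) * (real q - 2) * (2 * real q - 3))"
      using psi by (intro mult_left_mono[OF S]) simp
    thus ?thesis using A4(2) by linarith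
  qed
  moreover have bq: "bs \<beta> q \<ge> \<beta> + 1"
  proof -
    have "(int q - 1) * g \<ge> 1 * 1" by (rule mult_mono) (use q2 gcb in auto)
    thus ?thesis using q2 lt by (simp add: bs_def)
  qed
  have "real_of_int (bs \<beta> q) ^ 2 - real_of_int \<beta> ^ 2 \<ge> 1"
  proof -
    have "real_of_int \<beta> + 1 \<le> real_of_int (bs \<beta> q)" using bq by linarith
    hence "(real_of_int \<beta> + 1) ^ 2 \<le> real_of_int (bs \<beta> q) ^ 2"
      by (rule power_mono) (use assms in simp)
    thus ?thesis using assms by (simp add: power2_sum)
  qed
  hence "\<sigma> \<le> \<sigma> * (real_of_int (bs \<beta> q) ^ 2 - real_of_int \<beta> ^ 2)" using A4
    by (metis mult.right_neutral mult_left_mono less_imp_le)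
  ultimately show ?thesis by linarith
qed


definition blk :: "('n,'m) st \<Rightarrow> nat \<Rightarrow> 'm inp" where
  "blk z i = (if i = 0 then (kp (fst z), 0, 1) else (0, 0, 0))"

lemma traj_blk:
  "traj F (xp, us, \<beta>) (blk (xp, us, \<beta>)) i
     = (fpi fp i xp (kp xp), if i = 0 then us else kp xp, bs \<beta> i)"
proof (induction i)
  case 0 then show ?case by (simp add: fpi_def bs_def)
next
  case (Suc i)
  show ?case
  proof (cases "i = 0")
    case True then show ?thesis using Suc by (simp add: fpi_def bs_def dyn_def blk_def Let_def)
  next
    case False
    have "min (min (\<beta> + (int i - 1) * g) b + g) b = min (\<beta> + int i * g) b"
      using gcb by (auto simp: min_def algebra_simps)
    then show ?thesis using Suc False by (simp add: fpi_def bs_def dyn_def blk_def Let_def)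
  qed
qed


lemma ell_blk:
  "ell (traj F (xp, us, \<beta>) (blk (xp, us, \<beta>)) i) (blk (xp, us, \<beta>) i)
     = qf Q (fpi fp i xp (kp xp)) + qf R (kp xp) + \<psi> * (real_of_int b ^ 2 - real_of_int (bs \<beta> i) ^ 2)"
proof -
  have "traj F (xp, us, \<beta>) (blk (xp, us, \<beta>)) i = (fpi fp i xp (kp xp), if i = 0 then us else kp xp, bs \<beta> i)"
    by (rule traj_blk)
  then show ?thesis by (cases i) (simp_all del: traj.simps add: stage_cost_def blk_def fpi_def)
qed

lemma bs_range: "0 \<le> \<beta> \<Longrightarrow> \<beta> \<le> b \<Longrightarrow> 0 \<le> bs \<beta> i \<and> bs \<beta> i \<le> b"
  using gcb by (auto simp: bs_def)

lemma block:
  assumes "z \<in> Xf"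
  shows "(\<forall>i<q. traj F z (blk z) i \<in> X \<and> blk z i \<in> U) \<and> traj F z (blk z) q \<in> Xf
    \<and> (\<Sum>i<q. ell (traj F z (blk z) i) (blk z i)) + Vf (traj F z (blk z) q) \<le> Vf z"
proof -
  obtain xp us \<beta> where z: "z = (xp, us, \<beta>)" by (cases z)
  from assms have xp: "xp \<in> Xfp" "us \<in> Up" "0 \<le> \<beta>" "\<beta> \<le> b" by (auto simp: z state_set_def)
  have kp: "kp xp \<in> Up" using A1 xp by blast
  have P1: "traj F z (blk z) i \<in> X \<and> blk z i \<in> U" if "i < q" for i
  proof (cases "i = 0")
    case True then show ?thesis using xp A1 kp by (auto simp: z state_set_def input_set_def blk_def)
  next
    case False
    hence "fpi fp i xp (kp xp) \<in> Xp" using A1(3) xp that by auto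
    then show ?thesis using False kp bs_range[OF xp(3,4), of i] Up0
      by (auto simp: z traj_blk state_set_def input_set_def blk_def)
  qed
  have "fpi fp q xp (kp xp) \<in> Xfp" using A1(3) xp by auto
  hence P2: "traj F z (blk z) q \<in> Xf" using q2 kp bs_range[OF xp(3,4), of q]
    by (auto simp: z traj_blk state_set_def)
  have "(\<Sum>i<q. ell (traj F z (blk z) i) (blk z i))
      = (\<Sum>i<q. qf Q (fpi fp i xp (kp xp))) + real q * qf R (kp xp)
        + \<psi> * (\<Sum>i<q. real_of_int b ^ 2 - real_of_int (bs \<beta> i) ^ 2)"
    by (simp add: z ell_blk sum.distrib sum_distrib_left)
  moreover have "Vf (traj F z (blk z) q) = Vfp (fpi fp q xp (kp xp)) + \<sigma> * (real_of_int b ^ 2 - real_of_int (bs \<beta> q) ^ 2)"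
    by (simp add: z traj_blk term_cost_def)
  moreover have "Vf z = Vfp xp + \<sigma> * (real_of_int b ^ 2 - real_of_int \<beta> ^ 2)"
    by (simp add: z term_cost_def)
  moreover have "Vfp (fpi fp q xp (kp xp)) - Vfp xp
          \<le> - real q * qf R (kp xp) - (\<Sum>i<q. qf Q (fpi fp i xp (kp xp)))" using A2(2) xp by blast
  moreover note token_ineq[OF xp(3,4)]
  ultimately have P3: "(\<Sum>i<q. ell (traj F z (blk z) i) (blk z i)) + Vf (traj F z (blk z) q) \<le> Vf z"
    by (simp add: algebra_simps)
  show ?thesis using P1 P2 P3 by blast
qed


lemma multiblock:
  "z \<in> Xf \<Longrightarrow> \<exists>w. (\<forall>i<n*q. traj F z w i \<in> X \<and> w i \<in> U) \<and> traj F z w (n*q) \<in> Xf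
     \<and> (\<Sum>i<n*q. ell (traj F z w i) (w i)) + Vf (traj F z w (n*q)) \<le> Vf z"
proof (induction n arbitrary: z)
  case 0 then show ?case by auto
next
  case (Suc n)
  define v where "v = blk z"
  define z' where "z' = traj F z v q"
  have B: "(\<forall>i<q. traj F z v i \<in> X \<and> v i \<in> U) \<and> z' \<in> Xf
    \<and> (\<Sum>i<q. ell (traj F z v i) (v i)) + Vf z' \<le> Vf z"
    using block[OF Suc.prems] unfolding v_def z'_def by blast
  then obtain w' where w': "(\<forall>i<n*q. traj F z' w' i \<in> X \<and> w' i \<in> U) \<and> traj F z' w' (n*q) \<in> Xf
     \<and> (\<Sum>i<n*q. ell (traj F z' w' i) (w' i)) + Vf (traj F z' w' (n*q)) \<le> Vf z'"
    using Suc.IH by blast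
  define w where "w = (\<lambda>k. if k < q then v k else w' (k - q))"
  have t1: "traj F z w i = traj F z v i" if "i \<le> q" for i
    unfolding w_def using that by (rule traj_conc1)
  have t2: "traj F z w (q + k) = traj F z' w' k" for k
    unfolding w_def z'_def by (rule traj_conc2)
  have w1: "w i = v i" if "i < q" for i using that by (simp add: w_def)
  have w2: "w (q + k) = w' k" for k by (simp add: w_def)
  have nq: "Suc n * q = q + n * q" by simp
  have A: "\<forall>i<Suc n * q. traj F z w i \<in> X \<and> w i \<in> U"
  proof (intro allI impI)
    fix i assume "i < Suc n * q"
    show "traj F z w i \<in> X \<and> w i \<in> U"
    proof (cases "i < q")
      case True then show ?thesis using B t1 w1 by simp
    next
      case False
      then obtain k where k: "i = q + k" by (metis le_add_diff_inverse not_less)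
      hence "k < n * q" using \<open>i < Suc n * q\<close> by simp
      then show ?thesis using w' k t2 w2 by simp
    qed
  qed
  have E: "traj F z w (Suc n * q) = traj F z' w' (n * q)" unfolding nq t2 ..
  have "(\<Sum>i<Suc n * q. ell (traj F z w i) (w i))
     = (\<Sum>i<q. ell (traj F z w i) (w i)) + (\<Sum>k<n*q. ell (traj F z w (q + k)) (w (q + k)))"
    unfolding nq by (rule sum_split)
  also have "(\<Sum>i<q. ell (traj F z w i) (w i)) = (\<Sum>i<q. ell (traj F z v i) (v i))"
    by (rule sum.cong) (auto simp: t1 w1)
  also have "(\<Sum>k<n*q. ell (traj F z w (q + k)) (w (q + k))) = (\<Sum>k<n*q. ell (traj F z' w' k) (w' k))"
    by (simp add: t2 w2)
  finally have "(\<Sum>i<Suc n * q. ell (traj F z w i) (w i)) + Vf (traj F z w (Suc n * q)) \<le> Vf z"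
    unfolding E using conjunct2[OF conjunct2[OF B]] conjunct2[OF conjunct2[OF w']] by linarith
  moreover have "traj F z w (Suc n * q) \<in> Xf" using E w' by simp
  ultimately show ?case using A by blast
qed


lemma ell_nonneg:
  assumes "z \<in> X" "v \<in> U" shows "ell z v \<ge> 0"
proof -
  obtain xp us \<beta> where z: "z = (xp, us, \<beta>)" by (cases z)
  obtain uc \<gamma> \<delta> where v: "v = (uc, \<gamma>, \<delta>)" by (cases v)
  have b: "0 \<le> \<beta>" "\<beta> \<le> b" using assms by (auto simp: z state_set_def)
  have "real_of_int \<beta> ^ 2 \<le> real_of_int b ^ 2" using b by (simp add: power_mono)
  hence t: "0 \<le> \<psi> * (real_of_int b ^ 2 - real_of_int \<beta> ^ 2)" using psi by simp
  have gd: "(\<gamma> = 0 \<or> \<gamma> = 1) \<and> (\<delta> = 0 \<or> \<delta> = 1) \<and> \<gamma> + \<delta> \<le> 1" using assms(2) by (auto simp: v input_set_def)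
  have "0 \<le> qf Q xp" "0 \<le> qf R uc" "0 \<le> qf R us" using QR qf_nonneg by auto
  then show ?thesis using gd t by (auto simp: z v stage_cost_def)
qed

lemma Vf_nonneg:
  assumes "z \<in> Xf" shows "Vf z \<ge> 0"
proof -
  obtain xp us \<beta> where z: "z = (xp, us, \<beta>)" by (cases z)
  have b: "0 \<le> \<beta>" "\<beta> \<le> b" "xp \<in> Xfp" using assms by (auto simp: z state_set_def)
  have "real_of_int \<beta> ^ 2 \<le> real_of_int b ^ 2" using b by (simp add: power_mono)
  hence t: "0 \<le> \<sigma> * (real_of_int b ^ 2 - real_of_int \<beta> ^ 2)" using A4 by simp
  have "Vfp xp \<ge> 0" using A2(1) b(3) unfolding pos_def_fun_def by (cases "xp = 0") (auto intro: less_imp_le)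
  then show ?thesis using t by (simp add: z term_cost_def)
qed

lemma cost_nonneg:
  assumes "ocp_admissible fp g c b Xp Up Xfp N x0 us"
  shows "ocp_cost fp g c b Q R \<psi> Vfp \<sigma> N x0 us \<ge> 0"
  using assms unfolding ocp_admissible_def ocp_cost_def
  by (intro add_nonneg_nonneg sum_nonneg ell_nonneg Vf_nonneg) auto

lemma step:
  assumes adm: "ocp_admissible fp g c b Xp Up Xfp N x0 us" and NM: "N \<ge> M" and M: "M = r * q"
  shows "\<exists>us'. ocp_admissible fp g c b Xp Up Xfp N (traj F x0 us M) us'
     \<and> ocp_cost fp g c b Q R \<psi> Vfp \<sigma> N (traj F x0 us M) us'
        \<le> ocp_cost fp g c b Q R \<psi> Vfp \<sigma> N x0 us - (\<Sum>i<M. ell (traj F x0 us i) (us i))"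
proof -
  define z0 where "z0 = traj F x0 us M"
  define v where "v = (\<lambda>k. us (M + k))"
  define L where "L = N - M"
  have NL: "N = M + L" using NM by (simp add: L_def)
  have tv: "traj F z0 v i = traj F x0 us (M + i)" for i
    unfolding z0_def v_def by (rule traj_shift[symmetric])
  define zN where "zN = traj F x0 us N"
  have zN: "zN \<in> Xf" using adm by (simp add: ocp_admissible_def zN_def)
  have zN': "traj F z0 v L = zN" by (simp add: tv zN_def NL)
  obtain w where w: "(\<forall>i<r*q. traj F zN w i \<in> X \<and> w i \<in> U) \<and> traj F zN w (r*q) \<in> Xf
     \<and> (\<Sum>i<r*q. ell (traj F zN w i) (w i)) + Vf (traj F zN w (r*q)) \<le> Vf zN"
    using multiblock[OF zN] by blast
  define cand where "cand = (\<lambda>k. if k < L then v k else w (k - L))"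
  have t1: "traj F z0 cand i = traj F z0 v i" if "i \<le> L" for i
    unfolding cand_def using that by (rule traj_conc1)
  have t2: "traj F z0 cand (L + k) = traj F zN w k" for k
    unfolding cand_def zN'[symmetric] by (rule traj_conc2)
  have c1: "cand i = us (M + i)" if "i < L" for i using that by (simp add: cand_def v_def)
  have c2: "cand (L + k) = w k" for k by (simp add: cand_def)
  have A: "\<forall>i<N. traj F z0 cand i \<in> X \<and> cand i \<in> U"
  proof (intro allI impI)
    fix i assume iN: "i < N"
    show "traj F z0 cand i \<in> X \<and> cand i \<in> U"
    proof (cases "i < L")
      case True
      hence "M + i < N" using NL by simp
      then show ?thesis using True adm t1 c1 tv by (simp add: ocp_admissible_def v_def)
    next
      case False
      then obtain k where k: "i = L + k" by (metis le_add_diff_inverse not_less)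
      hence "k < r * q" using iN NL M by simp
      then show ?thesis using w k t2 c2 by simp
    qed
  qed
  have EN: "traj F z0 cand N = traj F zN w (r*q)" using t2[of "r*q"] NL M by (simp add: add.commute)
  have adm': "ocp_admissible fp g c b Xp Up Xfp N z0 cand"
    unfolding ocp_admissible_def using A EN w by simp
  have "(\<Sum>i<N. ell (traj F z0 cand i) (cand i))
     = (\<Sum>i<L. ell (traj F z0 cand i) (cand i)) + (\<Sum>k<r*q. ell (traj F z0 cand (L + k)) (cand (L + k)))"
    unfolding NL M by (subst add.commute) (rule sum_split)
  also have "(\<Sum>i<L. ell (traj F z0 cand i) (cand i)) = (\<Sum>i<L. ell (traj F x0 us (M + i)) (us (M + i)))"
    by (rule sum.cong) (auto simp: t1 c1 tv)
  also have "(\<Sum>k<r*q. ell (traj F z0 cand (L + k)) (cand (L + k))) = (\<Sum>k<r*q. ell (traj F zN w k) (w k))"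
    by (simp add: t2 c2)
  finally have C1: "(\<Sum>i<N. ell (traj F z0 cand i) (cand i)) = 
     (\<Sum>i<L. ell (traj F x0 us (M + i)) (us (M + i))) + (\<Sum>k<r*q. ell (traj F zN w k) (w k))" .
  have C2: "(\<Sum>i<N. ell (traj F x0 us i) (us i)) = 
     (\<Sum>i<M. ell (traj F x0 us i) (us i)) + (\<Sum>i<L. ell (traj F x0 us (M + i)) (us (M + i)))"
    unfolding NL by (rule sum_split)
  have "ocp_cost fp g c b Q R \<psi> Vfp \<sigma> N z0 cand
     \<le> ocp_cost fp g c b Q R \<psi> Vfp \<sigma> N x0 us - (\<Sum>i<M. ell (traj F x0 us i) (us i))"
    unfolding ocp_cost_def C1 C2 EN zN_def[symmetric] using conjunct2[OF conjunct2[OF w]] by linarith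
  then show ?thesis using adm' unfolding z0_def by blast
qed


lemma ell_parts:
  assumes "z \<in> X" "v \<in> U"
  shows "0 \<le> qf Q (fst z) \<and> qf Q (fst z) \<le> ell z v
    \<and> 0 \<le> qf R (fst (snd (F z v))) \<and> qf R (fst (snd (F z v))) \<le> ell z v
    \<and> 0 \<le> \<psi> * (real_of_int b ^ 2 - real_of_int (snd (snd z)) ^ 2)
    \<and> \<psi> * (real_of_int b ^ 2 - real_of_int (snd (snd z)) ^ 2) \<le> ell z v"
proof -
  obtain xp us \<beta> where z: "z = (xp, us, \<beta>)" by (cases z)
  obtain uc \<gamma> \<delta> where v: "v = (uc, \<gamma>, \<delta>)" by (cases v)
  have b: "0 \<le> \<beta>" "\<beta> \<le> b" using assms by (auto simp: z state_set_def)
  have "real_of_int \<beta> ^ 2 \<le> real_of_int b ^ 2" using b by (simp add: power_mono)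
  hence t: "0 \<le> \<psi> * (real_of_int b ^ 2 - real_of_int \<beta> ^ 2)" using psi by simp
  have gd: "(\<gamma> = 0 \<and> \<delta> = 0) \<or> (\<gamma> = 1 \<and> \<delta> = 0) \<or> (\<gamma> = 0 \<and> \<delta> = 1)"
    using assms(2) by (auto simp: v input_set_def)
  have "0 \<le> qf Q xp" "0 \<le> qf R uc" "0 \<le> qf R us" using QR qf_nonneg by auto
  then show ?thesis using gd t by (auto simp: z v stage_cost_def dyn_def Let_def)
qed

end

theorem theorem2:
  fixes fp :: "real^'n \<Rightarrow> real^'m \<Rightarrow> real^'n"
    and Xp :: "(real^'n) set" and Up :: "(real^'m) set"
    and Q :: "real^'n^'n" and R :: "real^'m^'m"
    and g c b :: int and q :: nat
    and \<psi> \<sigma> :: real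
    and Xfp :: "(real^'n) set" and kp :: "real^'n \<Rightarrow> real^'m" and Vfp :: "real^'n \<Rightarrow> real"
    and r M N :: nat
    and x :: "nat \<Rightarrow> ('n,'m) st" and u :: "nat \<Rightarrow> 'm inp"
  assumes fp0: "fp 0 0 = 0"
    and Xp: "closed Xp" "0 \<in> Xp"
    and Up: "closed Up" "0 \<in> Up"
    and QR: "pos_def_mat Q" "pos_def_mat R"
    and gcb: "g \<ge> 1" "c \<ge> g" "b \<ge> c"
    and q_def: "q = nat \<lceil>real_of_int c / real_of_int g\<rceil>"
    and q2: "q \<ge> 2"
    and psi: "\<psi> > 0"
    and A1: "closed Xfp" "Xfp \<subseteq> Xp" "0 \<in> Xfp"
      "\<forall>xp\<in>Xfp. kp xp \<in> Up"
      "\<forall>xp\<in>Xfp. (\<forall>i\<in>{1..q-1}. fpi fp i xp (kp xp) \<in> Xp) \<and> fpi fp q xp (kp xp) \<in> Xfp"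
    and A2: "continuous_on Xfp Vfp" "pos_def_fun Xfp Vfp"
      "\<forall>xp\<in>Xfp. Vfp (fpi fp q xp (kp xp)) - Vfp xp
          \<le> - real q * qf R (kp xp) - (\<Sum>i<q. qf Q (fpi fp i xp (kp xp)))"
    and A4: "\<sigma> > 0"
      "\<sigma> \<ge> \<psi> * (real q * real_of_int b ^ 2
               - 1/6 * real_of_int g ^ 2 * (real q - 1) * (real q - 2) * (2 * real q - 3))"
    and r: "r \<ge> 1" and M_def: "M = r * q" and N: "N \<ge> M"
    and loop_dyn: "\<forall>k. x (Suc k) = dyn fp g c b (x k) (u k)"
    and loop_mpc: "\<forall>j. ocp_feasible fp g c b Xp Up Xfp N (x (j * M)) \<longrightarrow>
         (\<exists>us. ocp_optimal fp g c b Xp Up Xfp Q R \<psi> Vfp \<sigma> N (x (j * M)) us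
               \<and> (\<forall>i<M. u (j * M + i) = us i))"
    and init: "ocp_feasible fp g c b Xp Up Xfp N (x 0)"
  shows "(\<forall>j. ocp_feasible fp g c b Xp Up Xfp N (x (j * M)))
         \<and> (x \<longlonglongrightarrow> (0, 0, b))"
proof -
  interpret S: setting fp Xp Up Q R g c b q \<psi> \<sigma> Xfp kp Vfp
    by unfold_locales (fact Up(2) QR gcb q_def q2 psi A1(2) A1(4) A1(5) A2(2) A2(3) A4)+
  let ?F = "dyn fp g c b"
  let ?ell = "stage_cost Q R \<psi> b"
  let ?X = "state_set Xp Up b"
  let ?U = "input_set Up"
  have Mpos: "M > 0" using r q2 M_def by simp
  have MS: "Suc j * M = j * M + M" for j by simp
  have CL: "x (j * M + i) = traj ?F (x (j * M)) us i"
    if "\<forall>i<M. u (j * M + i) = us i" "i \<le> M" for j us i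
    using that(2)
  proof (induction i)
    case 0 then show ?case by simp
  next
    case (Suc i)
    hence "x (j * M + i) = traj ?F (x (j * M)) us i" "u (j * M + i) = us i" using that(1) by auto
    then show ?case using loop_dyn by (metis add_Suc_right traj.simps(2))
  qed
  have feas: "ocp_feasible fp g c b Xp Up Xfp N (x (j * M))" for j
  proof (induction j)
    case 0 then show ?case using init by simp
  next
    case (Suc j)
    then obtain us where us: "ocp_optimal fp g c b Xp Up Xfp Q R \<psi> Vfp \<sigma> N (x (j * M)) us"
      "\<forall>i<M. u (j * M + i) = us i" using loop_mpc by blast
    obtain us' where "ocp_admissible fp g c b Xp Up Xfp N (traj ?F (x (j * M)) us M) us'"
      using S.step[OF _ N M_def] us(1) unfolding ocp_optimal_def by blast
    moreover have "traj ?F (x (j * M)) us M = x (Suc j * M)" unfolding MS using CL[OF us(2), of M] by simp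
    ultimately show ?case unfolding ocp_feasible_def by auto
  qed
  have "\<forall>j. \<exists>us. ocp_optimal fp g c b Xp Up Xfp Q R \<psi> Vfp \<sigma> N (x (j * M)) us
               \<and> (\<forall>i<M. u (j * M + i) = us i)" using loop_mpc feas by blast
  then obtain UU where UU: "\<And>j. ocp_optimal fp g c b Xp Up Xfp Q R \<psi> Vfp \<sigma> N (x (j * M)) (UU j)"
    "\<And>j i. i < M \<Longrightarrow> u (j * M + i) = UU j i" by metis
  define V where "V j = ocp_cost fp g c b Q R \<psi> Vfp \<sigma> N (x (j * M)) (UU j)" for j
  have adm: "ocp_admissible fp g c b Xp Up Xfp N (x (j * M)) (UU j)" for j
    using UU(1) unfolding ocp_optimal_def by blast
  have CL': "x (j * M + i) = traj ?F (x (j * M)) (UU j) i" if "i \<le> M" for j i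
    using CL[of j "UU j" i] UU(2) that by blast
  have inset: "x (j * M + i) \<in> ?X \<and> u (j * M + i) \<in> ?U" if "i < M" for j i
    using adm[of j] that N CL'[of i j] UU(2)[OF that, of j] unfolding ocp_admissible_def by auto
  have inset2: "x k \<in> ?X \<and> u k \<in> ?U" for k
  proof -
    have "k = (k div M) * M + k mod M" by simp
    moreover have "k mod M < M" using Mpos by simp
    ultimately show ?thesis using inset by metis
  qed
  have Vnn: "V j \<ge> 0" for j unfolding V_def by (rule S.cost_nonneg[OF adm])
  have dec: "V (Suc j) \<le> V j - (\<Sum>i<M. ?ell (x (j * M + i)) (u (j * M + i)))" for j
  proof -
    obtain us' where us': "ocp_admissible fp g c b Xp Up Xfp N (traj ?F (x (j * M)) (UU j) M) us'"
      "ocp_cost fp g c b Q R \<psi> Vfp \<sigma> N (traj ?F (x (j * M)) (UU j) M) us'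
        \<le> V j - (\<Sum>i<M. ?ell (traj ?F (x (j * M)) (UU j) i) (UU j i))"
      using S.step[OF adm N M_def] unfolding V_def by blast
    have e: "traj ?F (x (j * M)) (UU j) M = x (Suc j * M)" unfolding MS using CL'[of M j] by simp
    have "(\<Sum>i<M. ?ell (traj ?F (x (j * M)) (UU j) i) (UU j i)) = (\<Sum>i<M. ?ell (x (j * M + i)) (u (j * M + i)))"
      by (rule sum.cong) (auto simp: CL' UU(2))
    moreover have "V (Suc j) \<le> ocp_cost fp g c b Q R \<psi> Vfp \<sigma> N (x (Suc j * M)) us'"
      using UU(1)[of "Suc j"] us'(1) e unfolding V_def ocp_optimal_def by auto
    ultimately show ?thesis using us'(2) e by simp
  qed
  have psum: "(\<Sum>k<j * M. ?ell (x k) (u k)) \<le> V 0 - V j" for j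
  proof (induction j)
    case 0 then show ?case by simp
  next
    case (Suc j)
    have "(\<Sum>k<Suc j * M. ?ell (x k) (u k)) = (\<Sum>k<j * M. ?ell (x k) (u k)) + (\<Sum>i<M. ?ell (x (j * M + i)) (u (j * M + i)))"
      unfolding MS by (rule sum_split)
    then show ?case using Suc dec[of j] by linarith
  qed
  have ellnn: "?ell (x k) (u k) \<ge> 0" for k using inset2 S.ell_nonneg by blast
  have "summable (\<lambda>k. ?ell (x k) (u k))"
  proof (rule summableI_nonneg_bounded)
    show "0 \<le> ?ell (x k) (u k)" for k by (rule ellnn)
    show "(\<Sum>k<n. ?ell (x k) (u k)) \<le> V 0" for n
    proof -
      have "(\<Sum>k<n. ?ell (x k) (u k)) \<le> (\<Sum>k<n * M. ?ell (x k) (u k))"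
        using Mpos ellnn by (intro sum_mono2) auto
      also have "\<dots> \<le> V 0" using psum[of n] Vnn[of n] by linarith
      finally show ?thesis .
    qed
  qed
  hence lim0: "(\<lambda>k. ?ell (x k) (u k)) \<longlonglongrightarrow> 0" by (rule summable_LIMSEQ_zero)
  define px where "px k = fst (x k)" for k
  define sx where "sx k = fst (snd (x k))" for k
  define bx where "bx k = snd (snd (x k))" for k
  have parts: "0 \<le> qf Q (px k) \<and> qf Q (px k) \<le> ?ell (x k) (u k)
    \<and> 0 \<le> qf R (sx (Suc k)) \<and> qf R (sx (Suc k)) \<le> ?ell (x k) (u k)
    \<and> 0 \<le> \<psi> * (real_of_int b ^ 2 - real_of_int (bx k) ^ 2)
    \<and> \<psi> * (real_of_int b ^ 2 - real_of_int (bx k) ^ 2) \<le> ?ell (x k) (u k)" for k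
    using S.ell_parts[of "x k" "u k"] inset2[of k] loop_dyn unfolding px_def sx_def bx_def by simp
  have "(\<lambda>k. qf Q (px k)) \<longlonglongrightarrow> 0"
    using real_tendsto_sandwich[of "\<lambda>_. 0" "\<lambda>k. qf Q (px k)" sequentially "\<lambda>k. ?ell (x k) (u k)" 0] parts lim0
    by simp
  hence Lp: "px \<longlonglongrightarrow> 0" by (rule qf_tendsto0[OF QR(1)])
  have "(\<lambda>k. qf R (sx (Suc k))) \<longlonglongrightarrow> 0"
    using real_tendsto_sandwich[of "\<lambda>_. 0" "\<lambda>k. qf R (sx (Suc k))" sequentially "\<lambda>k. ?ell (x k) (u k)" 0] parts lim0
    by simp
  hence "(\<lambda>k. sx (Suc k)) \<longlonglongrightarrow> 0" by (rule qf_tendsto0[OF QR(2)])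
  hence Ls: "sx \<longlonglongrightarrow> 0" by (rule LIMSEQ_imp_Suc)
  have "eventually (\<lambda>k. ?ell (x k) (u k) < \<psi>) sequentially"
    using lim0 psi by (simp add: order_tendstoD(2))
  hence "eventually (\<lambda>k. bx k = b) sequentially"
  proof (rule eventually_mono)
    fix k assume a: "?ell (x k) (u k) < \<psi>"
    have r1: "real_of_int b ^ 2 - real_of_int (bx k) ^ 2 < 1"
    proof -
      have "\<psi> * (real_of_int b ^ 2 - real_of_int (bx k) ^ 2) < \<psi> * 1" using parts[of k] a by linarith
      thus ?thesis using psi by (simp only: mult_less_cancel_left_pos)
    qed
    have bb: "0 \<le> bx k" "bx k \<le> b" using inset2[of k] unfolding bx_def state_set_def by auto
    show "bx k = b"
    proof (rule ccontr)
      assume "bx k \<noteq> b"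
      hence "real_of_int (bx k) \<le> real_of_int b - 1" using bb by simp
      hence "real_of_int (bx k) ^ 2 \<le> (real_of_int b - 1) ^ 2" using bb by (intro power_mono) auto
      moreover have "(real_of_int b - 1) ^ 2 = real_of_int b ^ 2 - 2 * real_of_int b + 1"
        by (simp add: power2_diff)
      moreover have "real_of_int b \<ge> 1" using gcb by simp
      ultimately show False using r1 by linarith
    qed
  qed
  hence Lb: "bx \<longlonglongrightarrow> b" by (rule tendsto_eventually)
  have xe: "x = (\<lambda>k. (px k, sx k, bx k))" by (auto simp: px_def sx_def bx_def)
  have "x \<longlonglongrightarrow> (0, 0, b)" unfolding xe by (intro tendsto_Pair Lp Ls Lb)
  thus ?thesis using feas by blast
qed

end
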